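(* Consider the graphs $K^{h}_{n}$ ($3\le h\le n-1$), $K^{s+t}_{n}$ ($s,t\ge 2$, $n=s+t$) and $K^{s,t}_{n}$ ($s,t\ge2$, $n=s+t-1$). No two non-isomorphic graphs among all graphs of these three types are $D$-cospectral.
   Context: For a connected graph $G$, the distance matrix $D(G)$ has as $(i,j)$-entry the distance between the $i$-th and $j$-th vertices; two graphs are $D$-cospectral if their distance matrices have the same spectrum. $K^{h}_{n}$: the graph on $n$ vertices obtained from $K_h$ by attaching $n-h$ pendant edges to one vertex of $K_h$. $K^{s+t}_{n}$: the graph obtained from disjoint $K_s$ and $K_t$ by adding one edge joining a vertex of $K_s$ to a vertex of $K_t$. $K^{s,t}_{n}$: the graph obtained from disjoint $K_s$ and $K_t$ by identifying a vertex of $K_s$ with a vertex of $K_t$. *)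

theory Defs
  imports "Jordan_Normal_Form.Char_Poly"
begin

text \<open>A simple graph on the vertex set {0..<n} is given by an adjacency
  predicate E (symmetric, irreflexive, only relating vertices below n).\<close>

definition graph_dist :: "(nat \<Rightarrow> nat \<Rightarrow> bool) \<Rightarrow> nat \<Rightarrow> nat \<Rightarrow> nat" where
  "graph_dist E i j = (LEAST k. (E ^^ k) i j)"

definition dist_matrix :: "nat \<Rightarrow> (nat \<Rightarrow> nat \<Rightarrow> bool) \<Rightarrow> real mat" where
  "dist_matrix n E = mat n n (\<lambda>(i, j). real (graph_dist E i j))"

text \<open>Two graphs are D-cospectral iff their distance matrices have the same
  spectrum (with multiplicities), i.e. the same characteristic polynomial.\<close>
definition D_cospectral ::
  "nat \<Rightarrow> (nat \<Rightarrow> nat \<Rightarrow> bool) \<Rightarrow> nat \<Rightarrow> (nat \<Rightarrow> nat \<Rightarrow> bool) \<Rightarrow> bool" where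
  "D_cospectral n1 E1 n2 E2 \<longleftrightarrow> char_poly (dist_matrix n1 E1) = char_poly (dist_matrix n2 E2)"

definition graph_iso ::
  "nat \<Rightarrow> (nat \<Rightarrow> nat \<Rightarrow> bool) \<Rightarrow> nat \<Rightarrow> (nat \<Rightarrow> nat \<Rightarrow> bool) \<Rightarrow> bool" where
  "graph_iso n1 E1 n2 E2 \<longleftrightarrow> n1 = n2 \<and>
     (\<exists>f. bij_betw f {0..<n1} {0..<n2} \<and>
          (\<forall>i\<in>{0..<n1}. \<forall>j\<in>{0..<n1}. E1 i j \<longleftrightarrow> E2 (f i) (f j)))"

text \<open>K^h_n: clique on {0..<h}, vertices h..n-1 pendant at vertex 0.\<close>
definition K_pend :: "nat \<Rightarrow> nat \<Rightarrow> nat \<Rightarrow> nat \<Rightarrow> bool" where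
  "K_pend n h i j \<longleftrightarrow> i \<noteq> j \<and> i < n \<and> j < n \<and>
     ((i < h \<and> j < h) \<or> (i = 0 \<and> h \<le> j) \<or> (j = 0 \<and> h \<le> i))"

text \<open>K^{s+t}_n: cliques on {0..<s} and {s..<s+t}, plus the edge 0--s.\<close>
definition K_sum :: "nat \<Rightarrow> nat \<Rightarrow> nat \<Rightarrow> nat \<Rightarrow> bool" where
  "K_sum s t i j \<longleftrightarrow> i \<noteq> j \<and> i < s + t \<and> j < s + t \<and>
     ((i < s \<and> j < s) \<or> (s \<le> i \<and> s \<le> j) \<or> (i = 0 \<and> j = s) \<or> (i = s \<and> j = 0))"

text \<open>K^{s,t}_n: cliques on {0..<s} and on {0} \<union> {s..<s+t-1}, sharing vertex 0.\<close>
definition K_join :: "nat \<Rightarrow> nat \<Rightarrow> nat \<Rightarrow> nat \<Rightarrow> bool" where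
  "K_join s t i j \<longleftrightarrow> i \<noteq> j \<and> i < s + t - 1 \<and> j < s + t - 1 \<and>
     ((i < s \<and> j < s) \<or> ((i = 0 \<or> s \<le> i) \<and> (j = 0 \<or> s \<le> j)))"

definition in_families :: "nat \<Rightarrow> (nat \<Rightarrow> nat \<Rightarrow> bool) \<Rightarrow> bool" where
  "in_families n E \<longleftrightarrow>
     (\<exists>h. 3 \<le> h \<and> h \<le> n - 1 \<and> E = K_pend n h) \<or>
     (\<exists>s t. 2 \<le> s \<and> 2 \<le> t \<and> n = s + t \<and> E = K_sum s t) \<or>
     (\<exists>s t. 2 \<le> s \<and> 2 \<le> t \<and> n = s + t - 1 \<and> E = K_join s t)"

end

theory Submission
  imports Defs
begin



lemma det_Suc_row0:
  assumes A: "(A :: 'a :: comm_ring_1 mat) \<in> carrier_mat (Suc n) (Suc n)"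
  shows "det A = (\<Sum>j<Suc n. A $$ (0,j) * (-1)^j * det (mat_delete A 0 j))"
  using laplace_expansion_row[OF A, of 0] by (simp add: cofactor_def mult.assoc)

lemma det1: "(B::'a :: comm_ring_1 mat) \<in> carrier_mat (Suc 0) (Suc 0) \<Longrightarrow> det B = B$$(0,0)"
    by (subst det_Suc_row0, auto intro!: det_dim_zero simp: mat_delete_def)

lemma det2:
  assumes A: "(A :: 'a :: comm_ring_1 mat) \<in> carrier_mat 2 2"
  shows "det A = A$$(0,0)*A$$(1,1) - A$$(0,1) * A$$(1,0)"
proof -
  have A': "A \<in> carrier_mat (Suc 1) (Suc 1)" using A by (simp add: numeral_2_eq_2)
  show ?thesis
    apply (subst det_Suc_row0[OF A'])
    apply (simp add: lessThan_Suc)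
    apply (subst det1, use A in \<open>simp add: mat_delete_def\<close>)+
    using A by (simp add: mat_delete_def)
qed

lemma det3:
  assumes A: "(A :: 'a :: comm_ring_1 mat) \<in> carrier_mat 3 3"
  shows "det A = A$$(0,0)*(A$$(1,1)*A$$(2,2) - A$$(1,2)*A$$(2,1))
     - A$$(0,1)*(A$$(1,0)*A$$(2,2) - A$$(1,2)*A$$(2,0))
     + A$$(0,2)*(A$$(1,0)*A$$(2,1) - A$$(1,1)*A$$(2,0))"
proof -
  have A': "A \<in> carrier_mat (Suc 2) (Suc 2)" using A by (simp add: numeral_3_eq_3)
  show ?thesis
    apply (subst det_Suc_row0[OF A'])
    apply (simp add: lessThan_Suc numeral_3_eq_3 numeral_2_eq_2)
    apply (subst det2, use A in \<open>simp add: mat_delete_def\<close>)+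
    using A by (simp add: mat_delete_def numeral_3_eq_3 numeral_2_eq_2 algebra_simps)
qed




definition S2 :: "real mat \<Rightarrow> real" where
  "S2 A = (\<Sum>i<dim_row A. \<Sum>j<dim_row A. A$$(i,j)*A$$(j,i))"
definition S3 :: "real mat \<Rightarrow> real" where
  "S3 A = (\<Sum>i<dim_row A. \<Sum>j<dim_row A. \<Sum>k<dim_row A. A$$(i,j)*A$$(j,k)*A$$(k,i))"
definition zd :: "real mat \<Rightarrow> bool" where
  "zd A \<longleftrightarrow> (\<forall>i<dim_row A. A$$(i,i) = 0)"

lemma bij_insert_index: "i < Suc m \<Longrightarrow> bij_betw (insert_index i) {..<m} ({..<Suc m} - {i})"
  unfolding bij_betw_def
proof (intro conjI)
  assume i: "i < Suc m"
  show "inj_on (insert_index i) {..<m}" by (rule insert_index_inj_on)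
  show "insert_index i ` {..<m} = {..<Suc m} - {i}"
  proof (intro equalityI subsetI)
    fix x assume "x \<in> insert_index i ` {..<m}" thus "x \<in> {..<Suc m} - {i}"
      by (auto simp: insert_index_def)
  next
    fix x assume x: "x \<in> {..<Suc m} - {i}"
    show "x \<in> insert_index i ` {..<m}"
    proof (cases "x < i")
      case True thus ?thesis using x i by (intro image_eqI[of _ _ x], auto simp: insert_index_def)
    next
      case False
      then obtain y where "x = Suc y" using x by (cases x, auto)
      thus ?thesis using x False by (intro image_eqI[of _ _ y], auto simp: insert_index_def)
    qed
  qed
qed

lemma sum_insert_index: "i < Suc m \<Longrightarrow> (\<Sum>j<m. f (insert_index i j)) = (\<Sum>j\<in>{..<Suc m}-{i}. f j)"
  using sum.reindex_bij_betw[OF bij_insert_index, of i m f] by simp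

lemma sum_insert_index2: assumes i: "i < Suc m"
  shows "(\<Sum>j<m. \<Sum>k<m. f (insert_index i j) (insert_index i k)) = (\<Sum>j\<in>{..<Suc m}-{i}. \<Sum>k\<in>{..<Suc m}-{i}. f j k)"
proof -
  have "(\<Sum>j<m. \<Sum>k<m. f (insert_index i j) (insert_index i k)) = (\<Sum>j<m. \<Sum>k\<in>{..<Suc m}-{i}. f (insert_index i j) k)"
    by (rule sum.cong[OF refl], rule sum_insert_index[OF i])
  also have "\<dots> = (\<Sum>j\<in>{..<Suc m}-{i}. \<Sum>k\<in>{..<Suc m}-{i}. f j k)"
    by (rule sum_insert_index[OF i, where f="\<lambda>j. \<Sum>k\<in>{..<Suc m}-{i}. f j k"])
  finally show ?thesis .
qed

lemma sum_insert_index3: assumes i: "i < Suc m"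
  shows "(\<Sum>j<m. \<Sum>k<m. \<Sum>l<m. f (insert_index i j) (insert_index i k) (insert_index i l)) = (\<Sum>j\<in>{..<Suc m}-{i}. \<Sum>k\<in>{..<Suc m}-{i}. \<Sum>l\<in>{..<Suc m}-{i}. f j k l)"
proof -
  have "(\<Sum>j<m. \<Sum>k<m. \<Sum>l<m. f (insert_index i j) (insert_index i k) (insert_index i l)) = (\<Sum>j<m. \<Sum>k\<in>{..<Suc m}-{i}. \<Sum>l\<in>{..<Suc m}-{i}. f (insert_index i j) k l)"
    by (rule sum.cong[OF refl], rule sum_insert_index2[OF i])
  also have "\<dots> = (\<Sum>j\<in>{..<Suc m}-{i}. \<Sum>k\<in>{..<Suc m}-{i}. \<Sum>l\<in>{..<Suc m}-{i}. f j k l)"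
    by (rule sum_insert_index[OF i, where f="\<lambda>j. \<Sum>k\<in>{..<Suc m}-{i}. \<Sum>l\<in>{..<Suc m}-{i}. f j k l"])
  finally show ?thesis .
qed

lemma mat_delete_entry: "A \<in> carrier_mat (Suc m) (Suc m) \<Longrightarrow> j < m \<Longrightarrow> k < m \<Longrightarrow>
  mat_delete A i i $$ (j,k) = A $$ (insert_index i j, insert_index i k)"
  by (simp add: mat_delete_def insert_index_def)

lemma mat_delete_carr: "A \<in> carrier_mat (Suc m) (Suc m) \<Longrightarrow> mat_delete A i i \<in> carrier_mat m m"
  using mat_delete_carrier[of A "Suc m" "Suc m" i i] by simp

lemma zd_delete: assumes A: "A \<in> carrier_mat (Suc m) (Suc m)" and z: "zd A" and i: "i < Suc m"
  shows "zd (mat_delete A i i)"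
  unfolding zd_def using mat_delete_carr[OF A, of i] z A
  by (auto simp: mat_delete_entry zd_def insert_index_def)

lemma S2_delete: assumes A: "A \<in> carrier_mat (Suc m) (Suc m)" and z: "zd A" and i: "i < Suc m"
  shows "S2 (mat_delete A i i) = S2 A - 2 * (\<Sum>j<Suc m. A$$(i,j)*A$$(j,i))"
proof -
  let ?U = "{..<Suc m}"
  have "S2 (mat_delete A i i) = (\<Sum>j<m. \<Sum>k<m. A$$(insert_index i j, insert_index i k)*A$$(insert_index i k, insert_index i j))"
    unfolding S2_def using A by (auto intro!: sum.cong simp: mat_delete_entry[OF A])
  also have "\<dots> = (\<Sum>j\<in>?U-{i}. \<Sum>k\<in>?U-{i}. A$$(j,k)*A$$(k,j))"
    by (rule sum_insert_index2[OF i, where f="\<lambda>j k. A$$(j,k)*A$$(k,j)"])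
  also have "\<dots> = S2 A - 2 * (\<Sum>j<Suc m. A$$(i,j)*A$$(j,i))"
    using i A z unfolding S2_def zd_def
    by (simp add: sum_diff1 sum_subtractf mult.commute)
  finally show ?thesis .
qed

lemma S3_delete: assumes A: "A \<in> carrier_mat (Suc m) (Suc m)" and z: "zd A" and i: "i < Suc m"
  shows "S3 (mat_delete A i i) = S3 A - 3 * (\<Sum>j<Suc m. \<Sum>k<Suc m. A$$(i,j)*A$$(j,k)*A$$(k,i))"
proof -
  let ?U = "{..<Suc m}"
  have "S3 (mat_delete A i i) = (\<Sum>j<m. \<Sum>k<m. \<Sum>l<m. A$$(insert_index i j, insert_index i k)*A$$(insert_index i k, insert_index i l)*A$$(insert_index i l, insert_index i j))"
    unfolding S3_def using A by (auto intro!: sum.cong simp: mat_delete_entry[OF A])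
  also have "\<dots> = (\<Sum>j\<in>?U-{i}. \<Sum>k\<in>?U-{i}. \<Sum>l\<in>?U-{i}. A$$(j,k)*A$$(k,l)*A$$(l,j))"
    by (rule sum_insert_index3[OF i, where f="\<lambda>j k l. A$$(j,k)*A$$(k,l)*A$$(l,j)"])
  also have "\<dots> = S3 A - 3 * (\<Sum>j<Suc m. \<Sum>k<Suc m. A$$(i,j)*A$$(j,k)*A$$(k,i))"
  proof -
    have zz: "\<And>j. j < Suc m \<Longrightarrow> A$$(j,j) = 0" using z A unfolding zd_def by auto
    have e1: "(\<Sum>j<Suc m. \<Sum>k<Suc m. A$$(j,k)*A$$(k,i)*A$$(i,j)) = (\<Sum>j<Suc m. \<Sum>k<Suc m. A$$(i,j)*A$$(j,k)*A$$(k,i))"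
      by (simp add: mult.commute mult.left_commute)
    have e2: "(\<Sum>j<Suc m. \<Sum>l<Suc m. A$$(j,i)*A$$(i,l)*A$$(l,j)) = (\<Sum>j<Suc m. \<Sum>k<Suc m. A$$(i,j)*A$$(j,k)*A$$(k,i))"
      by (subst sum.swap, simp add: mult.commute mult.left_commute)
    show ?thesis
      using i unfolding S3_def using A
      apply (simp add: sum_diff1 sum_subtractf zz e1 e2 sum.distrib algebra_simps)
      apply (subst sum.swap)
      apply (simp add: ac_simps)
      done
  qed
  finally show ?thesis .
qed




lemma coeff0_char_poly: assumes A: "(A::real mat) \<in> carrier_mat n n"
  shows "coeff (char_poly A) 0 = det (-A)"
proof -
  have "char_matrix A 0 = A" using A unfolding char_matrix_def by auto
  thus ?thesis using char_poly_matrix[OF A, of 0] by (simp add: poly_0_coeff_0)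
qed

lemma sumT2: assumes A: "A \<in> carrier_mat m m"
  shows "(\<Sum>i<m. \<Sum>j<m. A$$(i,j)*A$$(j,i)) = S2 A" using A by (simp add: S2_def)

lemma sumT3: assumes A: "A \<in> carrier_mat m m"
  shows "(\<Sum>i<m. \<Sum>j<m. \<Sum>k<m. A$$(i,j)*A$$(j,k)*A$$(k,i)) = S3 A" using A by (simp add: S3_def)

lemma sum_helper: "(c::real) \<noteq> 0 \<Longrightarrow> (\<Sum>i\<in>I. - (S - c * T i) / c) = - (real (card I) * S) / c + (\<Sum>i\<in>I. T i)"
  by (simp add: sum_subtractf sum_divide_distrib[symmetric] sum_distrib_left[symmetric] sum_negf field_simps)

lemma coeff2: "2 \<le> m \<Longrightarrow> (A::real mat) \<in> carrier_mat m m \<Longrightarrow> zd A \<Longrightarrow>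
   coeff (char_poly A) (m-2) = - S2 A / 2"
proof (induction m arbitrary: A rule: nat_induct_at_least)
  case base
  have z: "A$$(0,0) = 0" "A$$(1,1) = 0" using base unfolding zd_def by auto
  have "coeff (char_poly A) (2-2) = det (-A)" using coeff0_char_poly[OF base(1)] by simp
  also have "\<dots> = - (A$$(0,1) * A$$(1,0))" using base(1) z by (subst det2, auto)
  also have "\<dots> = - S2 A / 2" using base(1) z by (simp add: S2_def numeral_2_eq_2 lessThan_Suc)
  finally show ?case .
next
  case (Suc m A)
  note A = Suc.prems(1) and z = Suc.prems(2)
  let ?B = "\<lambda>i. mat_delete A i i"
  have "of_nat (Suc (m-2)) * coeff (char_poly A) (Suc (m-2)) = coeff (pderiv (char_poly A)) (m-2)"
    by (simp add: coeff_pderiv)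
  also have "\<dots> = (\<Sum>i<Suc m. coeff (char_poly (?B i)) (m-2))"
    by (simp add: pderiv_char_poly[OF A] coeff_sum)
  also have "\<dots> = (\<Sum>i<Suc m. - S2 (?B i) / 2)"
    by (rule sum.cong[OF refl], rule Suc.IH, rule mat_delete_carr[OF A], rule zd_delete[OF A z], auto simp: Suc.hyps)
  also have "\<dots> = (\<Sum>i<Suc m. - (S2 A - 2 * (\<Sum>j<Suc m. A$$(i,j)*A$$(j,i))) / 2)"
    by (rule sum.cong[OF refl], subst S2_delete[OF A z], auto)
  also have "\<dots> = - (of_nat (Suc m) * S2 A - 2 * S2 A) / 2"
    by (subst sum_helper, simp, subst sumT2[OF A], simp)
  finally have eq: "of_nat (Suc (m-2)) * coeff (char_poly A) (Suc (m-2)) = - (of_nat (Suc m) * S2 A - 2 * S2 A) / 2" .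
  have i1: "Suc (m-2) = Suc m - 2" using Suc.hyps by simp
  have i2: "real (Suc m) = real (Suc (m-2)) + 2" using Suc.hyps by simp
  define x where "x = real (Suc (m-2))"
  define c where "c = coeff (char_poly A) (Suc (m-2))"
  have "x * c = x * (- S2 A / 2)" using eq unfolding i2 x_def[symmetric] c_def[symmetric]
    by (simp add: field_simps)
  moreover have "x \<noteq> 0" unfolding x_def by simp
  ultimately have "c = - S2 A / 2" by (metis mult_left_cancel)
  thus ?case unfolding c_def i1 .
qed

lemma coeff3: "3 \<le> m \<Longrightarrow> (A::real mat) \<in> carrier_mat m m \<Longrightarrow> zd A \<Longrightarrow>
   coeff (char_poly A) (m-3) = - S3 A / 3"
proof (induction m arbitrary: A rule: nat_induct_at_least)
  case base
  have z: "A$$(0,0) = 0" "A$$(1,1) = 0" "A$$(2,2) = 0" using base unfolding zd_def by auto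
  have "coeff (char_poly A) (3-3) = det (-A)" using coeff0_char_poly[OF base(1)] by simp
  also have "\<dots> = - (A$$(0,1) * A$$(1,2) * A$$(2,0) + A$$(0,2) * A$$(2,1) * A$$(1,0))"
    using base(1) z by (subst det3, auto simp: algebra_simps)
  also have "\<dots> = - S3 A / 3" using base(1) z
    by (simp add: S3_def numeral_3_eq_3 numeral_2_eq_2 lessThan_Suc algebra_simps)
  finally show ?case .
next
  case (Suc m A)
  note A = Suc.prems(1) and z = Suc.prems(2)
  let ?B = "\<lambda>i. mat_delete A i i"
  have "of_nat (Suc (m-3)) * coeff (char_poly A) (Suc (m-3)) = coeff (pderiv (char_poly A)) (m-3)"
    by (simp add: coeff_pderiv)
  also have "\<dots> = (\<Sum>i<Suc m. coeff (char_poly (?B i)) (m-3))"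
    by (simp add: pderiv_char_poly[OF A] coeff_sum)
  also have "\<dots> = (\<Sum>i<Suc m. - S3 (?B i) / 3)"
    by (rule sum.cong[OF refl], rule Suc.IH, rule mat_delete_carr[OF A], rule zd_delete[OF A z], auto simp: Suc.hyps)
  also have "\<dots> = (\<Sum>i<Suc m. - (S3 A - 3 * (\<Sum>j<Suc m. \<Sum>k<Suc m. A$$(i,j)*A$$(j,k)*A$$(k,i))) / 3)"
    by (rule sum.cong[OF refl], subst S3_delete[OF A z], auto)
  also have "\<dots> = - (of_nat (Suc m) * S3 A - 3 * S3 A) / 3"
    by (subst sum_helper, simp, subst sumT3[OF A], simp)
  finally have eq: "of_nat (Suc (m-3)) * coeff (char_poly A) (Suc (m-3)) = - (of_nat (Suc m) * S3 A - 3 * S3 A) / 3" .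
  have i1: "Suc (m-3) = Suc m - 3" using Suc.hyps by simp
  have i2: "real (Suc m) = real (Suc (m-3)) + 3" using Suc.hyps by simp
  define x where "x = real (Suc (m-3))"
  define c where "c = coeff (char_poly A) (Suc (m-3))"
  have "x * c = x * (- S3 A / 3)" using eq unfolding i2 x_def[symmetric] c_def[symmetric]
    by (simp add: field_simps)
  moreover have "x \<noteq> 0" unfolding x_def by simp
  ultimately have "c = - S3 A / 3" by (metis mult_left_cancel)
  thus ?case unfolding c_def i1 .
qed




lemma if_split_sum: "(i::nat) < n \<Longrightarrow> (\<Sum>j<n. if i = j then 0 else f j) = (\<Sum>j<n. f j) - (f i :: real)"
proof -
  assume i: "i < n"
  have "(\<Sum>j<n. if i = j then 0 else f j) = (\<Sum>j<n. f j - (if i = j then f j else 0))"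
    by (rule sum.cong, auto)
  also have "\<dots> = (\<Sum>j<n. f j) - f i" using i by (simp add: sum_subtractf)
  finally show ?thesis .
qed

lemma S2_block: assumes D: "D \<in> carrier_mat n n" and e: "\<And>i j. i<n \<Longrightarrow> j<n \<Longrightarrow> D$$(i,j) = (if i=j then 0 else G i j)"
  shows "S2 D = (\<Sum>i<n. \<Sum>j<n. G i j * G j i) - (\<Sum>i<n. G i i * G i i)"
proof -
  have "S2 D = (\<Sum>i<n. \<Sum>j<n. if i = j then 0 else G i j * G j i)"
    unfolding S2_def using D e by (auto intro!: sum.cong)
  also have "\<dots> = (\<Sum>i<n. (\<Sum>j<n. G i j * G j i) - G i i * G i i)"
    by (rule sum.cong[OF refl], subst if_split_sum, auto)
  finally show ?thesis by (simp add: sum_subtractf)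
qed

lemma S3_block: assumes D: "D \<in> carrier_mat n n" and e: "\<And>i j. i<n \<Longrightarrow> j<n \<Longrightarrow> D$$(i,j) = (if i=j then 0 else G i j)"
  shows "S3 D = (\<Sum>i<n. \<Sum>j<n. \<Sum>k<n. G i j * G j k * G k i) - 3 * (\<Sum>i<n. \<Sum>k<n. G i i * G i k * G k i) + 2 * (\<Sum>i<n. G i i * G i i * G i i)"
proof -
  have "S3 D = (\<Sum>i<n. \<Sum>j<n. if i = j then 0 else (\<Sum>k<n. if k = i then 0 else (if j = k then 0 else G i j * G j k * G k i)))"
    unfolding S3_def using D e by (auto intro!: sum.cong)
  also have "\<dots> = (\<Sum>i<n. \<Sum>j<n. if i = j then 0 else (\<Sum>k<n. G i j * G j k * G k i) - G i j * G j i * G i i - G i j * G j j * G j i)"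
  proof (intro sum.cong refl)
    fix i j assume i: "i \<in> {..<n}" and j: "j \<in> {..<n}"
    show "(if i = j then 0 else (\<Sum>k<n. if k = i then 0 else (if j = k then 0 else G i j * G j k * G k i))) =
      (if i = j then 0 else (\<Sum>k<n. G i j * G j k * G k i) - G i j * G j i * G i i - G i j * G j j * G j i)"
    proof (cases "i = j")
      case False
      have "(\<Sum>k<n. if k = i then 0 else (if j = k then 0 else G i j * G j k * G k i)) =
            (\<Sum>k<n. (if j = k then 0 else G i j * G j k * G k i) - (if i = k then (if j = k then 0 else G i j * G j k * G k i) else 0))"
        by (rule sum.cong, auto)
      also have "\<dots> = (\<Sum>k<n. if j = k then 0 else G i j * G j k * G k i) - G i j * G j i * G i i"
        using i False by (simp add: sum_subtractf)
      also have "\<dots> = (\<Sum>k<n. G i j * G j k * G k i) - G i j * G j j * G j i - G i j * G j i * G i i"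
        using j by (subst if_split_sum, auto)
      finally show ?thesis using False by simp
    qed simp
  qed
  also have "\<dots> = (\<Sum>i<n. (\<Sum>j<n. (\<Sum>k<n. G i j * G j k * G k i) - G i j * G j i * G i i - G i j * G j j * G j i)
       - ((\<Sum>k<n. G i i * G i k * G k i) - G i i * G i i * G i i - G i i * G i i * G i i))"
    by (rule sum.cong[OF refl], subst if_split_sum, auto)
  also have "\<dots> = (\<Sum>i<n. \<Sum>j<n. \<Sum>k<n. G i j * G j k * G k i) - (\<Sum>i<n. \<Sum>j<n. G i j * G j i * G i i)
     - (\<Sum>i<n. \<Sum>j<n. G i j * G j j * G j i) - (\<Sum>i<n. \<Sum>k<n. G i i * G i k * G k i) + 2 * (\<Sum>i<n. G i i * G i i * G i i)"
    by (simp add: sum_subtractf sum.distrib sum_distrib_left mult.assoc)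
  also have "(\<Sum>i<n. \<Sum>j<n. G i j * G j i * G i i) = (\<Sum>i<n. \<Sum>k<n. G i i * G i k * G k i)"
    by (simp add: ac_simps)
  also have "(\<Sum>i<n. \<Sum>j<n. G i j * G j j * G j i) = (\<Sum>i<n. \<Sum>k<n. G i i * G i k * G k i)"
    by (subst sum.swap, simp add: ac_simps)
  finally show ?thesis by simp
qed

lemma sum_class: assumes K: "finite K" and c: "c ` {..<(n::nat)} \<subseteq> K"
  shows "(\<Sum>i<n. f (c i)) = (\<Sum>a\<in>K. real (card {i\<in>{..<n}. c i = a}) * (f a :: real))"
proof -
  have "(\<Sum>i<n. f (c i)) = (\<Sum>a\<in>K. \<Sum>i\<in>{i\<in>{..<n}. c i = a}. f (c i))"
    by (rule sym, rule sum.group, use K c in auto)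
  also have "\<dots> = (\<Sum>a\<in>K. real (card {i\<in>{..<n}. c i = a}) * f a)"
    by (rule sum.cong[OF refl], simp)
  finally show ?thesis .
qed




lemma rp0: "((E::'a\<Rightarrow>'a\<Rightarrow>bool) ^^ 0) i j \<longleftrightarrow> i = j" by simp
lemma rp1: "((E::'a\<Rightarrow>'a\<Rightarrow>bool) ^^ 1) i j \<longleftrightarrow> E i j" by (simp add: relcompp_apply)
lemma rp2: "(E ^^ 2) i j \<longleftrightarrow> (\<exists>k. E i k \<and> E k j)" by (simp add: numeral_2_eq_2 relcompp_apply)
lemma rp3: "(E ^^ 3) i j \<longleftrightarrow> (\<exists>k l. E i k \<and> E k l \<and> E l j)"
  by (simp add: numeral_3_eq_3 relcompp_apply) blast

lemma gd0: "graph_dist E i i = 0"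
  unfolding graph_dist_def by (rule Least_equality, auto)

lemma gd1: "i \<noteq> j \<Longrightarrow> E i j \<Longrightarrow> graph_dist E i j = 1"
  unfolding graph_dist_def by (rule Least_equality, auto simp: rp1, case_tac y, auto)

lemma gd2: "i \<noteq> j \<Longrightarrow> \<not> E i j \<Longrightarrow> E i k \<Longrightarrow> E k j \<Longrightarrow> graph_dist E i j = 2"
  unfolding graph_dist_def
proof (rule Least_equality)
  assume "E i k" "E k j" thus "(E ^^ 2) i j" unfolding rp2 by blast
next
  fix y assume "i \<noteq> j" "\<not> E i j" "(E ^^ y) i j"
  thus "2 \<le> y" by (cases y; cases "y - 1"; auto)
qed

lemma gd3: "i \<noteq> j \<Longrightarrow> \<not> E i j \<Longrightarrow> (\<forall>k. \<not> (E i k \<and> E k j)) \<Longrightarrow> E i k \<Longrightarrow> E k l \<Longrightarrow> E l j \<Longrightarrow> graph_dist E i j = 3"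
  unfolding graph_dist_def
proof (rule Least_equality)
  assume "E i k" "E k l" "E l j" thus "(E ^^ 3) i j" unfolding rp3 by blast
next
  fix y assume a: "i \<noteq> j" "\<not> E i j" "\<forall>k. \<not> (E i k \<and> E k j)" "(E ^^ y) i j"
  show "3 \<le> y"
  proof (rule ccontr)
    assume "\<not> 3 \<le> y" hence "y = 0 \<or> y = 1 \<or> y = 2" by auto
    thus False using a rp2[of E i j] by auto
  qed
qed




definition NC :: "nat \<Rightarrow> (nat \<Rightarrow> nat) \<Rightarrow> nat \<Rightarrow> real" where
  "NC n c a = real (card {i\<in>{..<n}. c i = a})"

lemma sum_class2: assumes K: "finite K" and c: "c ` {..<(n::nat)} \<subseteq> K"
  shows "(\<Sum>i<n. \<Sum>j<n. g (c i) (c j)) = (\<Sum>a\<in>K. NC n c a * (\<Sum>b\<in>K. NC n c b * (g a b :: real)))"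
proof -
  have "(\<Sum>i<n. \<Sum>j<n. g (c i) (c j)) = (\<Sum>i<n. \<Sum>b\<in>K. NC n c b * g (c i) b)"
    unfolding NC_def by (rule sum.cong[OF refl], rule sum_class[OF K c])
  also have "\<dots> = (\<Sum>a\<in>K. NC n c a * (\<Sum>b\<in>K. NC n c b * g a b))"
    unfolding NC_def by (rule sum_class[OF K c])
  finally show ?thesis .
qed

lemma sum_class3: assumes K: "finite K" and c: "c ` {..<(n::nat)} \<subseteq> K"
  shows "(\<Sum>i<n. \<Sum>j<n. \<Sum>k<n. g (c i) (c j) (c k)) =
    (\<Sum>a\<in>K. NC n c a * (\<Sum>b\<in>K. NC n c b * (\<Sum>d\<in>K. NC n c d * (g a b d :: real))))"
proof -
  have "(\<Sum>i<n. \<Sum>j<n. \<Sum>k<n. g (c i) (c j) (c k)) = (\<Sum>i<n. \<Sum>b\<in>K. NC n c b * (\<Sum>d\<in>K. NC n c d * g (c i) b d))"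
    by (rule sum.cong[OF refl], rule sum_class2[OF K c])
  also have "\<dots> = (\<Sum>a\<in>K. NC n c a * (\<Sum>b\<in>K. NC n c b * (\<Sum>d\<in>K. NC n c d * g a b d)))"
    unfolding NC_def by (rule sum_class[OF K c])
  finally show ?thesis .
qed

lemma sum_class1: assumes K: "finite K" and c: "c ` {..<(n::nat)} \<subseteq> K"
  shows "(\<Sum>i<n. g (c i)) = (\<Sum>a\<in>K. NC n c a * (g a :: real))"
  unfolding NC_def by (rule sum_class[OF K c])

lemma dist_matrix_carrier: "dist_matrix n E \<in> carrier_mat n n"
  unfolding dist_matrix_def by simp

lemma dist_matrix_zd: "zd (dist_matrix n E)"
  unfolding dist_matrix_def zd_def by (simp add: gd0)

lemma dist_block:
  assumes K: "finite K" and c: "c ` {..<(n::nat)} \<subseteq> K"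
    and d: "\<And>i j. i<n \<Longrightarrow> j<n \<Longrightarrow> i \<noteq> j \<Longrightarrow> graph_dist E i j = M (c i) (c j)"
  shows "S2 (dist_matrix n E) = (\<Sum>a\<in>K. NC n c a * (\<Sum>b\<in>K. NC n c b * (real (M a b) * real (M b a))))
      - (\<Sum>a\<in>K. NC n c a * (real (M a a) * real (M a a)))"
    and "S3 (dist_matrix n E) = (\<Sum>a\<in>K. NC n c a * (\<Sum>b\<in>K. NC n c b * (\<Sum>e\<in>K. NC n c e * (real (M a b) * real (M b e) * real (M e a)))))
      - 3 * (\<Sum>a\<in>K. NC n c a * (\<Sum>b\<in>K. NC n c b * (real (M a a) * real (M a b) * real (M b a))))
      + 2 * (\<Sum>a\<in>K. NC n c a * (real (M a a) * real (M a a) * real (M a a)))"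
proof -
  let ?G = "\<lambda>i j. real (M (c i) (c j))"
  have e: "\<And>i j. i<n \<Longrightarrow> j<n \<Longrightarrow> dist_matrix n E $$ (i,j) = (if i=j then 0 else ?G i j)"
    unfolding dist_matrix_def using d by (auto simp: gd0)
  have s1: "(\<Sum>i<n. \<Sum>j<n. ?G i j * ?G j i) = (\<Sum>a\<in>K. NC n c a * (\<Sum>b\<in>K. NC n c b * (real (M a b) * real (M b a))))"
    by (rule sum_class2[OF K c, where g="\<lambda>a b. real (M a b) * real (M b a)"])
  have s2: "(\<Sum>i<n. ?G i i * ?G i i) = (\<Sum>a\<in>K. NC n c a * (real (M a a) * real (M a a)))"
    by (rule sum_class1[OF K c, where g="\<lambda>a. real (M a a) * real (M a a)"])
  have s3: "(\<Sum>i<n. \<Sum>j<n. \<Sum>k<n. ?G i j * ?G j k * ?G k i) = (\<Sum>a\<in>K. NC n c a * (\<Sum>b\<in>K. NC n c b * (\<Sum>e\<in>K. NC n c e * (real (M a b) * real (M b e) * real (M e a)))))"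
    by (rule sum_class3[OF K c, where g="\<lambda>a b e. real (M a b) * real (M b e) * real (M e a)"])
  have s4: "(\<Sum>i<n. \<Sum>k<n. ?G i i * ?G i k * ?G k i) = (\<Sum>a\<in>K. NC n c a * (\<Sum>b\<in>K. NC n c b * (real (M a a) * real (M a b) * real (M b a))))"
    by (rule sum_class2[OF K c, where g="\<lambda>a b. real (M a a) * real (M a b) * real (M b a)"])
  have s5: "(\<Sum>i<n. ?G i i * ?G i i * ?G i i) = (\<Sum>a\<in>K. NC n c a * (real (M a a) * real (M a a) * real (M a a)))"
    by (rule sum_class1[OF K c, where g="\<lambda>a. real (M a a) * real (M a a) * real (M a a)"])
  show "S2 (dist_matrix n E) = (\<Sum>a\<in>K. NC n c a * (\<Sum>b\<in>K. NC n c b * (real (M a b) * real (M b a))))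
      - (\<Sum>a\<in>K. NC n c a * (real (M a a) * real (M a a)))"
    using S2_block[OF dist_matrix_carrier e] s1 s2 by simp
  show "S3 (dist_matrix n E) = (\<Sum>a\<in>K. NC n c a * (\<Sum>b\<in>K. NC n c b * (\<Sum>e\<in>K. NC n c e * (real (M a b) * real (M b e) * real (M e a)))))
      - 3 * (\<Sum>a\<in>K. NC n c a * (\<Sum>b\<in>K. NC n c b * (real (M a a) * real (M a b) * real (M b a))))
      + 2 * (\<Sum>a\<in>K. NC n c a * (real (M a a) * real (M a a) * real (M a a)))"
    using S3_block[OF dist_matrix_carrier e] s3 s4 s5 by simp
qed




definition cP :: "nat \<Rightarrow> nat \<Rightarrow> nat" where "cP h i = (if i = 0 then 0 else if i < h then 1 else 2)"
definition MP :: "nat \<Rightarrow> nat \<Rightarrow> nat" where "MP a b = (if a = 0 \<or> b = 0 then 1 else if a = 1 \<and> b = 1 then 1 else 2)"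

lemma P_dist: assumes h: "1 \<le> h" and i: "i < n" and j: "j < n" and ij: "i \<noteq> j"
  shows "graph_dist (K_pend n h) i j = MP (cP h i) (cP h j)"
proof -
  have adj: "K_pend n h i j \<longleftrightarrow> (i = 0 \<or> j = 0 \<or> (i<h \<and> j<h))" using i j ij h by (auto simp: K_pend_def)
  show ?thesis
  proof (cases "i = 0 \<or> j = 0 \<or> (i<h \<and> j<h)")
    case True
    hence "graph_dist (K_pend n h) i j = 1" using adj ij by (intro gd1, auto)
    thus ?thesis using True by (auto simp: MP_def cP_def)
  next
    case False
    have "graph_dist (K_pend n h) i j = 2"
      by (rule gd2[where k=0], use ij adj False i j h in \<open>auto simp: K_pend_def\<close>)
    thus ?thesis using False by (auto simp: MP_def cP_def)
  qed
qed

lemma P_NC: assumes h: "1 \<le> h" "h \<le> n" 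
  shows "NC n (cP h) 0 = 1" "NC n (cP h) 1 = real h - 1" "NC n (cP h) 2 = real n - real h"
proof -
  have "{i\<in>{..<n}. cP h i = 0} = {0}" using h by (auto simp: cP_def)
  thus "NC n (cP h) 0 = 1" by (simp add: NC_def)
  have "{i\<in>{..<n}. cP h i = 1} = {1..<h}" using h by (auto simp: cP_def)
  thus "NC n (cP h) 1 = real h - 1" using h by (simp add: NC_def of_nat_diff)
  have "{i\<in>{..<n}. cP h i = 2} = {h..<n}" using h by (auto simp: cP_def)
  thus "NC n (cP h) 2 = real n - real h" using h by (simp add: NC_def of_nat_diff)
qed

lemma P_img: "cP h ` {..<n} \<subseteq> {0,1,2}" by (auto simp: cP_def)

lemma P_S: assumes h: "1 \<le> h" "h \<le> n"
  shows "S2 (dist_matrix n (K_pend n h)) = 4*real n^2 - 10*real n - 3*real h^2 + 9*real h"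
    and "S3 (dist_matrix n (K_pend n h)) = 8*real n^3-42*real n^2+46*real n+5*real h^3+3*real h^2-44*real h+36*real h*real n-12*real h^2*real n"
proof -
  have fin: "finite {0,1,2::nat}" by simp
  note db = dist_block[where K="{0,1,2}" and c="cP h" and n=n and E="K_pend n h" and M=MP, OF fin P_img]
  have e2: "S2 (dist_matrix n (K_pend n h)) = (\<Sum>a\<in>{0,1,2}. NC n (cP h) a * (\<Sum>b\<in>{0,1,2}. NC n (cP h) b * (real (MP a b) * real (MP b a))))
      - (\<Sum>a\<in>{0,1,2}. NC n (cP h) a * (real (MP a a) * real (MP a a)))"
    by (rule db(1), rule P_dist, use h in auto)
  have e3: "S3 (dist_matrix n (K_pend n h)) = (\<Sum>a\<in>{0,1,2}. NC n (cP h) a * (\<Sum>b\<in>{0,1,2}. NC n (cP h) b * (\<Sum>e\<in>{0,1,2}. NC n (cP h) e * (real (MP a b) * real (MP b e) * real (MP e a)))))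
      - 3 * (\<Sum>a\<in>{0,1,2}. NC n (cP h) a * (\<Sum>b\<in>{0,1,2}. NC n (cP h) b * (real (MP a a) * real (MP a b) * real (MP b a))))
      + 2 * (\<Sum>a\<in>{0,1,2}. NC n (cP h) a * (real (MP a a) * real (MP a a) * real (MP a a)))"
    by (rule db(2), rule P_dist, use h in auto)
  show "S2 (dist_matrix n (K_pend n h)) = 4*real n^2 - 10*real n - 3*real h^2 + 9*real h"
    unfolding e2 by (simp add: P_NC[OF h] P_NC(2)[OF h, unfolded One_nat_def] MP_def, simp add: algebra_simps power2_eq_square)
  show "S3 (dist_matrix n (K_pend n h)) = 8*real n^3-42*real n^2+46*real n+5*real h^3+3*real h^2-44*real h+36*real h*real n-12*real h^2*real n"
    unfolding e3 by (simp add: P_NC[OF h] P_NC(2)[OF h, unfolded One_nat_def] MP_def, simp add: algebra_simps power2_eq_square power3_eq_cube)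
qed




definition cJ :: "nat \<Rightarrow> nat \<Rightarrow> nat" where "cJ s i = (if i = 0 then 0 else if i < s then 1 else 2)"
definition MJ :: "nat \<Rightarrow> nat \<Rightarrow> nat" where "MJ a b = (if a = 0 \<or> b = 0 then 1 else if a = b then 1 else 2)"

lemma J_dist: assumes s: "1 \<le> s" and i: "i < s+t-1" and j: "j < s+t-1" and ij: "i \<noteq> j"
  shows "graph_dist (K_join s t) i j = MJ (cJ s i) (cJ s j)"
proof -
  have adj: "K_join s t i j \<longleftrightarrow> (i = 0 \<or> j = 0 \<or> (i<s \<and> j<s) \<or> (s \<le> i \<and> s \<le> j))"
    using i j ij s by (auto simp: K_join_def)
  show ?thesis
  proof (cases "i = 0 \<or> j = 0 \<or> (i<s \<and> j<s) \<or> (s \<le> i \<and> s \<le> j)")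
    case True
    hence "graph_dist (K_join s t) i j = 1" using adj ij by (intro gd1, auto)
    thus ?thesis using True by (auto simp: MJ_def cJ_def)
  next
    case False
    have "graph_dist (K_join s t) i j = 2"
      by (rule gd2[where k=0], use ij adj False i j s in \<open>auto simp: K_join_def\<close>)
    thus ?thesis using False by (auto simp: MJ_def cJ_def)
  qed
qed

lemma J_NC: assumes h: "1 \<le> s" "1 \<le> t"
  shows "NC (s+t-1) (cJ s) 0 = 1" "NC (s+t-1) (cJ s) (Suc 0) = real s - 1" "NC (s+t-1) (cJ s) 2 = real t - 1"
proof -
  have "{i\<in>{..<s+t-1}. cJ s i = 0} = {0}" using h by (auto simp: cJ_def)
  thus "NC (s+t-1) (cJ s) 0 = 1" by (simp add: NC_def)
  have "{i\<in>{..<s+t-1}. cJ s i = Suc 0} = {1..<s}" using h by (auto simp: cJ_def)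
  thus "NC (s+t-1) (cJ s) (Suc 0) = real s - 1" using h by (simp add: NC_def of_nat_diff)
  have "{i\<in>{..<s+t-1}. cJ s i = 2} = {s..<s+t-1}" using h by (auto simp: cJ_def)
  thus "NC (s+t-1) (cJ s) 2 = real t - 1" using h by (simp add: NC_def of_nat_diff)
qed

lemma J_img: "cJ s ` {..<n} \<subseteq> {0,1,2}" by (auto simp: cJ_def)

lemma J_S: assumes h: "1 \<le> s" "1 \<le> t"
  shows "S2 (dist_matrix (s+t-1) (K_join s t)) = 8 - 9*real s + 8*real s*real t + real s^2 - 9*real t + real t^2"
    and "S3 (dist_matrix (s+t-1) (K_join s t)) = -36 + 50*real s - 60*real s*real t + 12*real s*real t^2 - 15*real s^2 + 12*real s^2*real t + real s^3 + 50*real t - 15*real t^2 + real t^3"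
proof -
  have fin: "finite {0,1,2::nat}" by simp
  note db = dist_block[where K="{0,1,2}" and c="cJ s" and n="s+t-1" and E="K_join s t" and M=MJ, OF fin J_img]
  have e2: "S2 (dist_matrix (s+t-1) (K_join s t)) = (\<Sum>a\<in>{0,1,2}. NC (s+t-1) (cJ s) a * (\<Sum>b\<in>{0,1,2}. NC (s+t-1) (cJ s) b * (real (MJ a b) * real (MJ b a))))
      - (\<Sum>a\<in>{0,1,2}. NC (s+t-1) (cJ s) a * (real (MJ a a) * real (MJ a a)))"
    by (rule db(1), rule J_dist, use h in auto)
  have e3: "S3 (dist_matrix (s+t-1) (K_join s t)) = (\<Sum>a\<in>{0,1,2}. NC (s+t-1) (cJ s) a * (\<Sum>b\<in>{0,1,2}. NC (s+t-1) (cJ s) b * (\<Sum>e\<in>{0,1,2}. NC (s+t-1) (cJ s) e * (real (MJ a b) * real (MJ b e) * real (MJ e a)))))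
      - 3 * (\<Sum>a\<in>{0,1,2}. NC (s+t-1) (cJ s) a * (\<Sum>b\<in>{0,1,2}. NC (s+t-1) (cJ s) b * (real (MJ a a) * real (MJ a b) * real (MJ b a))))
      + 2 * (\<Sum>a\<in>{0,1,2}. NC (s+t-1) (cJ s) a * (real (MJ a a) * real (MJ a a) * real (MJ a a)))"
    by (rule db(2), rule J_dist, use h in auto)
  show "S2 (dist_matrix (s+t-1) (K_join s t)) = 8 - 9*real s + 8*real s*real t + real s^2 - 9*real t + real t^2"
    unfolding e2 by (simp add: J_NC[OF h] J_NC[OF h, unfolded One_nat_def] MJ_def, simp add: algebra_simps power2_eq_square)
  show "S3 (dist_matrix (s+t-1) (K_join s t)) = -36 + 50*real s - 60*real s*real t + 12*real s*real t^2 - 15*real s^2 + 12*real s^2*real t + real s^3 + 50*real t - 15*real t^2 + real t^3"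
    unfolding e3 by (simp add: J_NC[OF h] J_NC[OF h, unfolded One_nat_def] MJ_def, simp add: algebra_simps power2_eq_square power3_eq_cube)
qed

definition cS :: "nat \<Rightarrow> nat \<Rightarrow> nat" where "cS s i = (if i = 0 then 0 else if i < s then 1 else if i = s then 2 else 3)"
definition MS :: "nat \<Rightarrow> nat \<Rightarrow> nat" where "MS a b = (if a = b then 1 else if (a=1\<and>b=3) \<or> (a=3\<and>b=1) then 3
   else if (a=0\<and>b=3)\<or>(a=3\<and>b=0)\<or>(a=1\<and>b=2)\<or>(a=2\<and>b=1) then 2 else 1)"

lemma S_dist: assumes s: "1 \<le> s" and i: "i < s+t" and j: "j < s+t" and ij: "i \<noteq> j"
  shows "graph_dist (K_sum s t) i j = MS (cS s i) (cS s j)"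
proof -
  have adj: "K_sum s t i j \<longleftrightarrow> ((i<s \<and> j<s) \<or> (s \<le> i \<and> s \<le> j) \<or> (i = 0 \<and> j = s) \<or> (i = s \<and> j = 0))"
    using i j ij s by (auto simp: K_sum_def)
  show ?thesis
  proof (cases "(i<s \<and> j<s) \<or> (s \<le> i \<and> s \<le> j) \<or> (i = 0 \<and> j = s) \<or> (i = s \<and> j = 0)")
    case True
    hence "graph_dist (K_sum s t) i j = 1" using adj ij by (intro gd1, auto)
    thus ?thesis using True ij s by (auto simp: MS_def cS_def)
  next
    case F: False
    show ?thesis
    proof (cases "i = 0 \<or> j = 0")
      case True
      have "graph_dist (K_sum s t) i j = 2"
        by (rule gd2[where k=s], use ij adj F True i j s in \<open>auto simp: K_sum_def\<close>)
      thus ?thesis using F True by (auto simp: MS_def cS_def)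
    next
      case F2: False
      show ?thesis
      proof (cases "i = s \<or> j = s")
        case True
        have "graph_dist (K_sum s t) i j = 2"
          by (rule gd2[where k=0], use ij adj F F2 True i j s in \<open>auto simp: K_sum_def\<close>)
        thus ?thesis using F F2 True by (auto simp: MS_def cS_def)
      next
        case F3: False
        have "graph_dist (K_sum s t) i j = 3"
        proof (cases "i < s")
          case True
          show ?thesis
            by (rule gd3[where k=0 and l=s], use ij adj F F2 F3 True i j s in \<open>auto simp: K_sum_def\<close>)
        next
          case False
          show ?thesis
            by (rule gd3[where k=s and l=0], use ij adj F F2 F3 False i j s in \<open>auto simp: K_sum_def\<close>)
        qed
        thus ?thesis using F F2 F3 by (auto simp: MS_def cS_def)
      qed
    qed
  qed
qed

lemma S_NC: assumes h: "1 \<le> s" "1 \<le> t"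
  shows "NC (s+t) (cS s) 0 = 1" "NC (s+t) (cS s) (Suc 0) = real s - 1" "NC (s+t) (cS s) 2 = 1" "NC (s+t) (cS s) 3 = real t - 1"
proof -
  have "{i\<in>{..<s+t}. cS s i = 0} = {0}" using h by (auto simp: cS_def)
  thus "NC (s+t) (cS s) 0 = 1" by (simp add: NC_def)
  have "{i\<in>{..<s+t}. cS s i = Suc 0} = {1..<s}" using h by (auto simp: cS_def)
  thus "NC (s+t) (cS s) (Suc 0) = real s - 1" using h by (simp add: NC_def of_nat_diff)
  have "{i\<in>{..<s+t}. cS s i = 2} = {s}" using h by (auto simp: cS_def)
  thus "NC (s+t) (cS s) 2 = 1" by (simp add: NC_def)
  have "{i\<in>{..<s+t}. cS s i = 3} = {Suc s..<s+t}" using h by (auto simp: cS_def)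
  thus "NC (s+t) (cS s) 3 = real t - 1" using h by (simp add: NC_def of_nat_diff)
qed

lemma S_img: "cS s ` {..<n} \<subseteq> {0,1,2,3}" by (auto simp: cS_def)

lemma S_S: assumes h: "1 \<le> s" "1 \<le> t"
  shows "S2 (dist_matrix (s+t) (K_sum s t)) = 4 - 11*real s + 18*real s*real t + real s^2 - 11*real t + real t^2"
    and "S3 (dist_matrix (s+t) (K_sum s t)) = -12 + 41*real s - 90*real s*real t + 27*real s*real t^2 - 18*real s^2 + 27*real s^2*real t + real s^3 + 41*real t - 18*real t^2 + real t^3"
proof -
  have fin: "finite {0,1,2,3::nat}" by simp
  note db = dist_block[where K="{0,1,2,3}" and c="cS s" and n="s+t" and E="K_sum s t" and M=MS, OF fin S_img]
  have e2: "S2 (dist_matrix (s+t) (K_sum s t)) = (\<Sum>a\<in>{0,1,2,3}. NC (s+t) (cS s) a * (\<Sum>b\<in>{0,1,2,3}. NC (s+t) (cS s) b * (real (MS a b) * real (MS b a))))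
      - (\<Sum>a\<in>{0,1,2,3}. NC (s+t) (cS s) a * (real (MS a a) * real (MS a a)))"
    by (rule db(1), rule S_dist, use h in auto)
  have e3: "S3 (dist_matrix (s+t) (K_sum s t)) = (\<Sum>a\<in>{0,1,2,3}. NC (s+t) (cS s) a * (\<Sum>b\<in>{0,1,2,3}. NC (s+t) (cS s) b * (\<Sum>e\<in>{0,1,2,3}. NC (s+t) (cS s) e * (real (MS a b) * real (MS b e) * real (MS e a)))))
      - 3 * (\<Sum>a\<in>{0,1,2,3}. NC (s+t) (cS s) a * (\<Sum>b\<in>{0,1,2,3}. NC (s+t) (cS s) b * (real (MS a a) * real (MS a b) * real (MS b a))))
      + 2 * (\<Sum>a\<in>{0,1,2,3}. NC (s+t) (cS s) a * (real (MS a a) * real (MS a a) * real (MS a a)))"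
    by (rule db(2), rule S_dist, use h in auto)
  show "S2 (dist_matrix (s+t) (K_sum s t)) = 4 - 11*real s + 18*real s*real t + real s^2 - 11*real t + real t^2"
    unfolding e2 by (simp add: S_NC[OF h] MS_def, simp add: algebra_simps power2_eq_square)
  show "S3 (dist_matrix (s+t) (K_sum s t)) = -12 + 41*real s - 90*real s*real t + 27*real s*real t^2 - 18*real s^2 + 27*real s^2*real t + real s^3 + 41*real t - 18*real t^2 + real t^3"
    unfolding e3 by (simp add: S_NC[OF h] MS_def, simp add: algebra_simps power2_eq_square power3_eq_cube)
qed




lemma arith_PP: assumes "3 \<le> h" "3 \<le> h'"
  and "4*real n^2 - 10*real n - 3*real h^2 + 9*real h = 4*real n^2 - 10*real n - 3*real h'^2 + 9*real h'"
  shows "h = h'"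
proof -
  have "(real h - real h') * (real h + real h' - 3) = 0" using assms(3) by (simp add: algebra_simps power2_eq_square)
  moreover have "real h + real h' - 3 \<noteq> 0" using assms(1,2) by simp
  ultimately show ?thesis by simp
qed

lemma swap_sol: assumes "real s + real t = real s' + real t'" "real s * real t = real s' * real t'"
  shows "(s = s' \<and> t = t') \<or> (s = t' \<and> t = s')"
proof -
  have "(real s - real s') * (real s - real t') = 0"
    using assms by (simp add: algebra_simps) (smt (verit) assms(1) distrib_left mult.commute)
  hence "s = s' \<or> s = t'" by simp
  thus ?thesis using assms(1) by auto
qed

lemma arith_SS: assumes "s + t = s' + t'"
  and "4 - 11*real s + 18*real s*real t + real s^2 - 11*real t + real t^2 = 4 - 11*real s' + 18*real s'*real t' + real s'^2 - 11*real t' + real t'^2"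
  shows "(s = s' \<and> t = t') \<or> (s = t' \<and> t = s')"
proof -
  have a: "real s + real t = real s' + real t'" using assms(1) by (metis of_nat_add)
  have "(real s + real t)^2 = (real s' + real t')^2" using a by simp
  hence e: "real s^2 + real t^2 + 2 * (real s * real t) = real s'^2 + real t'^2 + 2 * (real s' * real t')"
    by (simp add: power2_sum)
  have "real s * real t = real s' * real t'" using assms(2) a e
    by (simp only: mult.assoc; linarith)
  thus ?thesis using swap_sol a by blast
qed

lemma arith_JJ: assumes "s + t = s' + t'"
  and "8 - 9*real s + 8*real s*real t + real s^2 - 9*real t + real t^2 = 8 - 9*real s' + 8*real s'*real t' + real s'^2 - 9*real t' + real t'^2"
  shows "(s = s' \<and> t = t') \<or> (s = t' \<and> t = s')"
proof -
  have a: "real s + real t = real s' + real t'" using assms(1) by (metis of_nat_add)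
  have "(real s + real t)^2 = (real s' + real t')^2" using a by simp
  hence e: "real s^2 + real t^2 + 2 * (real s * real t) = real s'^2 + real t'^2 + 2 * (real s' * real t')"
    by (simp add: power2_sum)
  have "real s * real t = real s' * real t'" using assms(2) a e
    by (simp only: mult.assoc; linarith)
  thus ?thesis using swap_sol a by blast
qed



lemma PJ_real: fixes h n s t :: real
  assumes n: "n = s + t - 1" and h: "3 \<le> h" "h \<le> n - 1"
  and e2: "4*n^2 - 10*n - 3*h^2 + 9*h = 8 - 9*s + 8*s*t + s^2 - 9*t + t^2"
  and e3: "8*n^3-42*n^2+46*n+5*h^3+3*h^2-44*h+36*h*n-12*h^2*n = -36 + 50*s - 60*s*t + 12*s*t^2 - 15*s^2 + 12*s^2*t + s^3 + 50*t - 15*t^2 + t^3"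
  shows "h = n - 1 \<and> (s - 2) * (t - 2) = 0"
proof -
  have id: "15 * ((h-n+1)*(h-n)*(2*h+n-5)) = 6*((8*n^3-42*n^2+46*n+5*h^3+3*h^2-44*h+36*h*n-12*h^2*n) - (-36 + 50*s - 60*s*t + 12*s*t^2 - 15*s^2 + 12*s^2*t + s^3 + 50*t - 15*t^2 + t^3))
     - (9*(s+t)-30) * ((4*n^2 - 10*n - 3*h^2 + 9*h) - (8 - 9*s + 8*s*t + s^2 - 9*t + t^2))"
    unfolding n by (simp add: algebra_simps power2_eq_square power3_eq_cube)
  hence "(h-n+1)*(h-n)*(2*h+n-5) = 0" unfolding e2 e3 by simp
  moreover have "h - n \<noteq> 0" "2*h+n-5 \<noteq> 0" using h by auto
  ultimately have hn: "h = n - 1" by simp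
   have "(s - 2) * (t - 2) * (-6) = (4*n^2 - 10*n - 3*h^2 + 9*h) - (8 - 9*s + 8*s*t + s^2 - 9*t + t^2)"
    unfolding hn n by (simp add: algebra_simps power2_eq_square)
  with e2 have "(s-2)*(t-2) = 0" by simp
  with hn show ?thesis by simp
qed

lemma PS_real: fixes h n s t :: real
  assumes n: "n = s + t" and h: "3 \<le> h" "h \<le> n - 1" and st: "2 \<le> s" "2 \<le> t"
  and e2: "4*n^2 - 10*n - 3*h^2 + 9*h = 4 - 11*s + 18*s*t + s^2 - 11*t + t^2"
  and e3: "8*n^3-42*n^2+46*n+5*h^3+3*h^2-44*h+36*h*n-12*h^2*n = -12 + 41*s - 90*s*t + 27*s*t^2 - 18*s^2 + 27*s^2*t + s^3 + 41*t - 18*t^2 + t^3"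
  shows False
proof -
  define Q where "Q = 40*h^2 - (20*n+97)*h - 20*n^2 + 103*n - 12"
  have id: "2 * ((h-n+1)*Q) = 16*((8*n^3-42*n^2+46*n+5*h^3+3*h^2-44*h+36*h*n-12*h^2*n) - (-12 + 41*s - 90*s*t + 27*s*t^2 - 18*s^2 + 27*s^2*t + s^3 + 41*t - 18*t^2 + t^3))
     - (24*n-54) * ((4*n^2 - 10*n - 3*h^2 + 9*h) - (4 - 11*s + 18*s*t + s^2 - 11*t + t^2))"
    unfolding n Q_def by (simp add: algebra_simps power2_eq_square power3_eq_cube)
  hence z: "(h-n+1)*Q = 0" unfolding e2 e3 by simp
  show False
  proof (cases "h = n - 1")
    case True
    have "(s - 1) * (t - 1) * (-16) = (4*n^2 - 10*n - 3*h^2 + 9*h) - (4 - 11*s + 18*s*t + s^2 - 11*t + t^2)"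
      unfolding True n by (simp add: algebra_simps power2_eq_square)
    with e2 have "(s-1)*(t-1) = 0" by simp
    thus False using st by simp
  next
    case False
    hence Q0: "Q = 0" using z by simp
    have p1: "0 \<le> (h-3)*(n-1-h)" using h by simp
    have p2: "0 \<le> n*(n-1-h)" using h by simp
    have "Q < 0" using p1 p2 h unfolding Q_def by (simp add: algebra_simps power2_eq_square)
    thus False using Q0 by simp
  qed
qed

lemma SJ_real: fixes s t s' t' :: real
  assumes n: "s + t = s' + t' - 1" and st: "2 \<le> s" "2 \<le> t"
  and e2: "4 - 11*s + 18*s*t + s^2 - 11*t + t^2 = 8 - 9*s' + 8*s'*t' + s'^2 - 9*t' + t'^2"
  and e3: "-12 + 41*s - 90*s*t + 27*s*t^2 - 18*s^2 + 27*s^2*t + s^3 + 41*t - 18*t^2 + t^3 = -36 + 50*s' - 60*s'*t' + 12*s'*t'^2 - 15*s'^2 + 12*s'^2*t' + s'^3 + 50*t' - 15*t'^2 + t'^3"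
  shows False
proof -
  have tt: "t' = s + t + 1 - s'" using n by simp
  have id: "12 * ((s-1)*(t-1)) = 6*((-12 + 41*s - 90*s*t + 27*s*t^2 - 18*s^2 + 27*s^2*t + s^3 + 41*t - 18*t^2 + t^3) - (-36 + 50*s' - 60*s'*t' + 12*s'*t'^2 - 15*s'^2 + 12*s'^2*t' + s'^3 + 50*t' - 15*t'^2 + t'^3))
     - (9*(s+t)-21) * ((4 - 11*s + 18*s*t + s^2 - 11*t + t^2) - (8 - 9*s' + 8*s'*t' + s'^2 - 9*t' + t'^2))"
    unfolding tt by (simp add: algebra_simps power2_eq_square power3_eq_cube)
  hence "(s-1)*(t-1) = 0" unfolding e2 e3 by simp
  thus False using st by simp
qed

lemma iso_refl: "graph_iso n E n E"
  unfolding graph_iso_def by (intro conjI exI[of _ id], auto)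

lemma iso_sum: assumes n: "n = s + t"
  shows "graph_iso n (K_sum s t) n (K_sum t s)"
  unfolding graph_iso_def
proof (intro conjI exI[of _ "\<lambda>i. if i < s then t + i else i - s"])
  show "bij_betw (\<lambda>i. if i < s then t + i else i - s) {0..<n} {0..<n}"
    by (rule bij_betw_byWitness[where f'="\<lambda>j. if j < t then s + j else j - t"], use n in auto)
  show "\<forall>i\<in>{0..<n}. \<forall>j\<in>{0..<n}. K_sum s t i j = K_sum t s (if i < s then t + i else i - s) (if j < s then t + j else j - s)"
    using n by (auto simp: K_sum_def)
qed simp

lemma iso_join: assumes n: "n = s + t - 1" and st: "1 \<le> s" "1 \<le> t"
  shows "graph_iso n (K_join s t) n (K_join t s)"
  unfolding graph_iso_def
proof (intro conjI exI[of _ "\<lambda>i. if i = 0 then 0 else if i < s then i + t - 1 else i + 1 - s"])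
  show "bij_betw (\<lambda>i. if i = 0 then 0 else if i < s then i + t - 1 else i + 1 - s) {0..<n} {0..<n}"
    by (rule bij_betw_byWitness[where f'="\<lambda>j. if j = 0 then 0 else if j < t then j + s - 1 else j + 1 - t"], use n st in auto)
  show "\<forall>i\<in>{0..<n}. \<forall>j\<in>{0..<n}. K_join s t i j = K_join t s (if i = 0 then 0 else if i < s then i + t - 1 else i + 1 - s) (if j = 0 then 0 else if j < s then j + t - 1 else j + 1 - s)"
    using n st by (auto simp: K_join_def)
qed simp

lemma pend_join: assumes "2 \<le> n" shows "K_pend n (n-1) = K_join (n-1) 2"
  using assms by (intro ext, auto simp: K_pend_def K_join_def)




lemma fam_n: "in_families n E \<Longrightarrow> 3 \<le> n"
  unfolding in_families_def by auto

lemma iso_PJ: assumes n: "n = s + t - 1" and st: "2 \<le> s" "2 \<le> t" and h: "h = n - 1" and z: "s = 2 \<or> t = 2"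
  shows "graph_iso n (K_pend n h) n (K_join s t)" "graph_iso n (K_join s t) n (K_pend n h)"
proof -
  have n2: "2 \<le> n" using n st by simp
  have pj: "K_pend n h = K_join (n-1) 2" using pend_join[OF n2] h by simp
  have nn: "n = (n - 1) + 2 - 1" "n = 2 + (n - 1) - 1" using n2 by simp_all
  have i1: "graph_iso n (K_join (n-1) 2) n (K_join 2 (n-1))" by (rule iso_join[OF nn(1)], use n2 in simp_all)
  have i2: "graph_iso n (K_join 2 (n-1)) n (K_join (n-1) 2)" by (rule iso_join[OF nn(2)], use n2 in simp_all)
  have "graph_iso n (K_join (n-1) 2) n (K_join s t) \<and> graph_iso n (K_join s t) n (K_join (n-1) 2)"
  proof (cases "s = 2")
    case True
    hence "t = n - 1" using n by simp
    hence "K_join s t = K_join 2 (n-1)" using True by simp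
    thus ?thesis using i1 i2 by simp
  next
    case False
    hence "t = 2" using z by simp
    moreover hence "s = n - 1" using n by simp
    ultimately have "K_join s t = K_join (n-1) 2" by simp
    thus ?thesis using iso_refl by simp
  qed
  thus "graph_iso n (K_pend n h) n (K_join s t)" "graph_iso n (K_join s t) n (K_pend n h)" unfolding pj by auto
qed

lemma PJ_nat: assumes n: "n = s + t - 1" and h: "3 \<le> h" "h \<le> n - 1" and st: "2 \<le> s" "2 \<le> t"
  and e2: "S2 (dist_matrix n (K_pend n h)) = S2 (dist_matrix n (K_join s t))"
  and e3: "S3 (dist_matrix n (K_pend n h)) = S3 (dist_matrix n (K_join s t))"
  shows "h = n - 1 \<and> (s = 2 \<or> t = 2)"
proof -
  have hn: "1 \<le> h" "h \<le> n" using h by auto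
  have st1: "1 \<le> s" "1 \<le> t" using st by auto
  have rn: "real n = real s + real t - 1" using n st by (simp add: of_nat_diff)
  have rh: "real h \<le> real n - 1" using h n st by (simp add: of_nat_diff[symmetric])
  have "real h = real n - 1 \<and> (real s - 2) * (real t - 2) = 0"
    by (rule PJ_real[OF rn _ rh], use h in simp, use e2 P_S(1)[OF hn] J_S(1)[OF st1] n in simp,
        use e3 P_S(2)[OF hn] J_S(2)[OF st1] n in simp)
  thus ?thesis using n st by auto
qed

lemma PS_nat: assumes n: "n = s + t" and h: "3 \<le> h" "h \<le> n - 1" and st: "2 \<le> s" "2 \<le> t"
  and e2: "S2 (dist_matrix n (K_pend n h)) = S2 (dist_matrix n (K_sum s t))"
  and e3: "S3 (dist_matrix n (K_pend n h)) = S3 (dist_matrix n (K_sum s t))"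
  shows False
proof -
  have hn: "1 \<le> h" "h \<le> n" using h by auto
  have st1: "1 \<le> s" "1 \<le> t" using st by auto
  have rn: "real n = real s + real t" using n by simp
  have rh: "real h \<le> real n - 1" using h n st by (simp add: of_nat_diff[symmetric])
  show False
    by (rule PS_real[OF rn _ rh], use h st in simp, use st in simp, use st in simp,
        use e2 P_S(1)[OF hn] S_S(1)[OF st1] n in simp,
        use e3 P_S(2)[OF hn] S_S(2)[OF st1] n in simp)
qed

lemma SJ_nat: assumes n: "n = s + t" "n = s' + t' - 1" and st: "2 \<le> s" "2 \<le> t" "2 \<le> s'" "2 \<le> t'"
  and e2: "S2 (dist_matrix n (K_sum s t)) = S2 (dist_matrix n (K_join s' t'))"
  and e3: "S3 (dist_matrix n (K_sum s t)) = S3 (dist_matrix n (K_join s' t'))"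
  shows False
proof -
  have st1: "1 \<le> s" "1 \<le> t" "1 \<le> s'" "1 \<le> t'" using st by auto
  have rn: "real s + real t = real s' + real t' - 1" using n st by (simp add: of_nat_diff)
  show False
    by (rule SJ_real[OF rn], use st in simp, use st in simp,
        use e2 S_S(1)[OF st1(1,2)] J_S(1)[OF st1(3,4)] n in simp,
        use e3 S_S(2)[OF st1(1,2)] J_S(2)[OF st1(3,4)] n in simp)
qed




lemma core: assumes f1: "in_families n E1" and f2: "in_families n E2"
  and e2: "S2 (dist_matrix n E1) = S2 (dist_matrix n E2)"
  and e3: "S3 (dist_matrix n E1) = S3 (dist_matrix n E2)"
  shows "graph_iso n E1 n E2"
  using f1 unfolding in_families_def
proof (elim disjE exE conjE)
  fix h assume h: "3 \<le> h" "h \<le> n - 1" and E1: "E1 = K_pend n h"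
  have hn: "1 \<le> h" "h \<le> n" using h by auto
  show ?thesis using f2 unfolding in_families_def
  proof (elim disjE exE conjE)
    fix h' assume h': "3 \<le> h'" "h' \<le> n - 1" and E2: "E2 = K_pend n h'"
    have hn': "1 \<le> h'" "h' \<le> n" using h' by auto
    have "h = h'" by (rule arith_PP[OF h(1) h'(1)], use e2 P_S(1)[OF hn] P_S(1)[OF hn'] E1 E2 in simp)
    thus ?thesis using E1 E2 iso_refl by simp
  next
    fix s t assume st: "2 \<le> s" "2 \<le> t" "n = s + t" and E2: "E2 = K_sum s t"
    show ?thesis using PS_nat[OF st(3) h st(1,2)] e2 e3 E1 E2 by simp
  next
    fix s t assume st: "2 \<le> s" "2 \<le> t" "n = s + t - 1" and E2: "E2 = K_join s t"
    have "h = n - 1 \<and> (s = 2 \<or> t = 2)" using PJ_nat[OF st(3) h st(1,2)] e2 e3 E1 E2 by simp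
    thus ?thesis using iso_PJ(1)[OF st(3) st(1,2)] E1 E2 by auto
  qed
next
  fix s t assume st: "2 \<le> s" "2 \<le> t" "n = s + t" and E1: "E1 = K_sum s t"
  show ?thesis using f2 unfolding in_families_def
  proof (elim disjE exE conjE)
    fix h assume h: "3 \<le> h" "h \<le> n - 1" and E2: "E2 = K_pend n h"
    show ?thesis using PS_nat[OF st(3) h st(1,2)] e2 e3 E1 E2 by simp
  next
    fix s' t' assume st': "2 \<le> s'" "2 \<le> t'" "n = s' + t'" and E2: "E2 = K_sum s' t'"
    have st1: "1 \<le> s" "1 \<le> t" "1 \<le> s'" "1 \<le> t'" using st st' by auto
    have "(s = s' \<and> t = t') \<or> (s = t' \<and> t = s')"
      by (rule arith_SS, use st st' in simp, use e2 S_S(1)[OF st1(1,2)] S_S(1)[OF st1(3,4)] E1 E2 st st' in simp)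
    thus ?thesis using E1 E2 iso_refl iso_sum[OF st(3)] by auto
  next
    fix s' t' assume st': "2 \<le> s'" "2 \<le> t'" "n = s' + t' - 1" and E2: "E2 = K_join s' t'"
    show ?thesis using SJ_nat[OF st(3) st'(3) st(1,2) st'(1,2)] e2 e3 E1 E2 by simp
  qed
next
  fix s t assume st: "2 \<le> s" "2 \<le> t" "n = s + t - 1" and E1: "E1 = K_join s t"
  show ?thesis using f2 unfolding in_families_def
  proof (elim disjE exE conjE)
    fix h assume h: "3 \<le> h" "h \<le> n - 1" and E2: "E2 = K_pend n h"
    have "h = n - 1 \<and> (s = 2 \<or> t = 2)" using PJ_nat[OF st(3) h st(1,2)] e2 e3 E1 E2 by simp
    thus ?thesis using iso_PJ(2)[OF st(3) st(1,2)] E1 E2 by auto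
  next
    fix s' t' assume st': "2 \<le> s'" "2 \<le> t'" "n = s' + t'" and E2: "E2 = K_sum s' t'"
    show ?thesis using SJ_nat[OF st'(3) st(3) st'(1,2) st(1,2)] e2 e3 E1 E2 by simp
  next
    fix s' t' assume st': "2 \<le> s'" "2 \<le> t'" "n = s' + t' - 1" and E2: "E2 = K_join s' t'"
    have st1: "1 \<le> s" "1 \<le> t" "1 \<le> s'" "1 \<le> t'" using st st' by auto
    have "(s = s' \<and> t = t') \<or> (s = t' \<and> t = s')"
      by (rule arith_JJ, use st st' in simp, use e2 J_S(1)[OF st1(1,2)] J_S(1)[OF st1(3,4)] E1 E2 st st' in simp)
    thus ?thesis using E1 E2 iso_refl iso_join[OF st(3) st1(1,2)] by auto
  qed
qed

theorem corollary2p8: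
  assumes "in_families n1 E1" and "in_families n2 E2"
    and "D_cospectral n1 E1 n2 E2"
  shows "graph_iso n1 E1 n2 E2"
proof -
  let ?D1 = "dist_matrix n1 E1" and ?D2 = "dist_matrix n2 E2"
  have cp: "char_poly ?D1 = char_poly ?D2" using assms(3) unfolding D_cospectral_def .
  have "n1 = degree (char_poly ?D1)" using degree_monic_char_poly[OF dist_matrix_carrier] by simp
  also have "\<dots> = n2" unfolding cp using degree_monic_char_poly[OF dist_matrix_carrier] by simp
  finally have n: "n1 = n2" .
  have n3: "3 \<le> n1" using fam_n[OF assms(1)] .
  have "- S2 ?D1 / 2 = - S2 ?D2 / 2"
    using coeff2[OF _ dist_matrix_carrier dist_matrix_zd, of n1 E1] coeff2[OF _ dist_matrix_carrier dist_matrix_zd, of n2 E2] cp n n3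
    by simp
  hence e2: "S2 ?D1 = S2 (dist_matrix n1 E2)" using n by simp
  have "- S3 ?D1 / 3 = - S3 ?D2 / 3"
    using coeff3[OF _ dist_matrix_carrier dist_matrix_zd, of n1 E1] coeff3[OF _ dist_matrix_carrier dist_matrix_zd, of n2 E2] cp n n3
    by simp
  hence e3: "S3 ?D1 = S3 (dist_matrix n1 E2)" using n by simp
  show ?thesis using core[OF assms(1) _ e2 e3] assms(2) n by simp
qed


end
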